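(* Let $n$ be a nonnegative integer and $0<\pi<1$. Let $(Y,T)$ be the pair of random variables with joint probability mass function $$P(Y=k,T=t)=\#\mathcal{P}_{k,n-k}(t)\,(1-\pi)^{n-k}\pi^k$$ for $k=0,1,\dots,n$ and $t=0,1,\dots,k(n-k)$, and $0$ otherwise. Then $$E(YT)=\binom{n}{2}\pi(1-\pi)\bigl(\pi(n-2)+1\bigr),\qquad \operatorname{Cov}(Y,T)=\binom{n}{2}\pi(1-\pi)(1-2\pi).$$
   Context: For integers $k\ge0$ and $m\ge 0$, $\#\mathcal{P}_{k,m}(t)$ denotes the number of integer tuples $(\lambda_1,\dots,\lambda_k)$ with $m\ge\lambda_1\ge\cdots\ge\lambda_k\ge0$ and $\lambda_1+\cdots+\lambda_k=t$. Interpretation: in $n$ independent Bernoulli trials each with success probability $\pi$, $Y$ is the number of successes and $T$ is the number of pairs (success, later failure) in the outcome sequence. *)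

theory Defs
  imports Complex_Main
begin

definition numP :: "nat \<Rightarrow> nat \<Rightarrow> nat \<Rightarrow> nat" where
  "numP k m t = card {xs :: nat list. length xs = k \<and> sorted_wrt (\<ge>) xs \<and>
                        (\<forall>x\<in>set xs. x \<le> m) \<and> sum_list xs = t}"

definition jointPMF :: "nat \<Rightarrow> real \<Rightarrow> nat \<Rightarrow> nat \<Rightarrow> real" where
  "jointPMF n p k t =
     (if k \<le> n \<and> t \<le> k * (n - k)
      then real (numP k (n - k) t) * (1 - p) ^ (n - k) * p ^ k else 0)"

definition expect :: "nat \<Rightarrow> real \<Rightarrow> (nat \<Rightarrow> nat \<Rightarrow> real) \<Rightarrow> real" where
  "expect n p f = (\<Sum>k = 0..n. \<Sum>t = 0..k * (n - k). f k t * jointPMF n p k t)"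

definition covYT :: "nat \<Rightarrow> real \<Rightarrow> real" where
  "covYT n p = expect n p (\<lambda>k t. real k * real t)
               - expect n p (\<lambda>k t. real k) * expect n p (\<lambda>k t. real t)"

end

theory Submission
  imports Defs
begin

definition LL :: "nat \<Rightarrow> nat \<Rightarrow> nat list set" where
  "LL k m = {xs. length xs = k \<and> sorted_wrt (\<ge>) xs \<and> (\<forall>x\<in>set xs. x \<le> m)}"

lemma LL_finite: "finite (LL k m)"
proof -
  have "LL k m \<subseteq> {xs. set xs \<subseteq> {0..m} \<and> length xs = k}"
    unfolding LL_def by auto
  moreover have "finite {xs. set xs \<subseteq> {0..m} \<and> length xs = k}"
    by (rule finite_lists_length_eq) simp
  ultimately show ?thesis by (rule finite_subset)
qed

lemma sum_list_bound: "(\<forall>x\<in>set xs. x \<le> m) \<Longrightarrow> sum_list xs \<le> length xs * (m::nat)"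
  by (induction xs) auto

lemma sum_list_refl: "(\<forall>x\<in>set xs. x \<le> m) \<Longrightarrow>
   sum_list (rev (map (\<lambda>x. m - x) xs)) + sum_list xs = length xs * (m::nat)"
  by (induction xs) auto

lemma LL_Suc: "LL (Suc k) m = (\<Union>j\<in>{..m}. (Cons j) ` LL k j)"
proof
  show "LL (Suc k) m \<subseteq> (\<Union>j\<in>{..m}. (Cons j) ` LL k j)"
  proof
    fix xs assume "xs \<in> LL (Suc k) m"
    then obtain x ys where xs: "xs = x # ys" and h: "length ys = k" "sorted_wrt (\<ge>) (x#ys)"
       "\<forall>z\<in>set (x#ys). z \<le> m" unfolding LL_def by (cases xs) auto
    then have "ys \<in> LL k x" unfolding LL_def by auto
    then show "xs \<in> (\<Union>j\<in>{..m}. (Cons j) ` LL k j)" using xs h by auto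
  qed
next
  show "(\<Union>j\<in>{..m}. (Cons j) ` LL k j) \<subseteq> LL (Suc k) m"
    unfolding LL_def by (auto intro: order_trans)
qed

lemma LL_card: "card (LL k m) = (k + m) choose k"
proof (induction k arbitrary: m)
  case 0
  have "LL 0 m = {[]}" unfolding LL_def by auto
  then show ?case by simp
next
  case (Suc k)
  have "card (LL (Suc k) m) = (\<Sum>j\<in>{..m}. card ((Cons j) ` LL k j))"
    unfolding LL_Suc
    by (rule card_UN_disjoint) (auto simp: LL_finite)
  also have "\<dots> = (\<Sum>j\<in>{..m}. (k + j) choose j)"
    by (rule sum.cong) (auto simp: card_image Suc binomial_symmetric[of k "k+j" for j])
  also have "\<dots> = Suc (k + m) choose m" by (rule sum_choose_lower)
  also have "\<dots> = (Suc k + m) choose Suc k"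
    using binomial_symmetric[of m "Suc k + m"] by simp
  finally show ?case .
qed

lemma LL_sum: "2 * (\<Sum>xs\<in>LL k m. real (sum_list xs)) = real (k * m) * real (card (LL k m))"
proof -
  define r where "r = (\<lambda>xs. rev (map (\<lambda>x. m - x) xs))"
  have rL: "r xs \<in> LL k m" if "xs \<in> LL k m" for xs
  proof -
    have "sorted_wrt (\<ge>) xs" "\<forall>x\<in>set xs. x \<le> m" "length xs = k" using that unfolding LL_def by auto
    then show ?thesis unfolding r_def LL_def
      by (auto simp: sorted_wrt_rev sorted_wrt_map elim!: sorted_wrt_mono_rel[rotated])
  qed
  have rr: "r (r xs) = xs" if "xs \<in> LL k m" for xs
  proof -
    have "\<forall>x\<in>set xs. x \<le> m" using that unfolding LL_def by auto
    then have "map ((\<lambda>x. m - x) \<circ> (\<lambda>x. m - x)) xs = map id xs"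
      by (intro map_cong) auto
    then show ?thesis unfolding r_def by (simp add: rev_map)
  qed
  have s: "real (sum_list (r xs)) + real (sum_list xs) = real (k * m)" if "xs \<in> LL k m" for xs
  proof -
    have "\<forall>x\<in>set xs. x \<le> m" "length xs = k" using that unfolding LL_def by auto
    from sum_list_refl[OF this(1)] this(2) show ?thesis unfolding r_def
      by (metis of_nat_add)
  qed
  have "(\<Sum>xs\<in>LL k m. real (sum_list (r xs))) = (\<Sum>xs\<in>LL k m. real (sum_list xs))"
    by (rule sum.reindex_bij_witness[of _ r r]) (auto simp: rL rr)
  then have "2 * (\<Sum>xs\<in>LL k m. real (sum_list xs)) =
     (\<Sum>xs\<in>LL k m. real (sum_list (r xs)) + real (sum_list xs))"
    by (simp add: sum.distrib)
  also have "\<dots> = (\<Sum>xs\<in>LL k m. real (k * m))" by (rule sum.cong) (auto simp: s)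
  finally show ?thesis by simp
qed

lemma numP_LL: "numP k m t = card {xs \<in> LL k m. sum_list xs = t}"
  unfolding numP_def LL_def by (rule arg_cong[where f=card]) auto

lemma sum_numP: "(\<Sum>t=0..k*m. h t * real (numP k m t)) = (\<Sum>xs\<in>LL k m. h (sum_list xs))"
proof -
  have "(\<Sum>xs\<in>LL k m. h (sum_list xs)) =
        (\<Sum>t\<in>{0..k*m}. \<Sum>xs\<in>{xs \<in> LL k m. sum_list xs = t}. h (sum_list xs))"
    by (rule sum.group[symmetric]) (use LL_finite in \<open>auto simp: LL_def intro: sum_list_bound\<close>)
  also have "\<dots> = (\<Sum>t=0..k*m. h t * real (numP k m t))"
    by (rule sum.cong) (auto simp: numP_LL)
  finally show ?thesis by simp
qed

lemma numP_sum0: "(\<Sum>t=0..k*m. real (numP k m t)) = real ((k+m) choose k)"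
  using sum_numP[of "\<lambda>_. 1" k m] by (simp add: LL_card)

lemma numP_sum1: "(\<Sum>t=0..k*m. real t * real (numP k m t)) = real (k*m) * real ((k+m) choose k) / 2"
  using sum_numP[of "\<lambda>t. real t" k m] LL_sum[of k m] by (simp add: LL_card)


definition bs :: "real \<Rightarrow> nat \<Rightarrow> (nat \<Rightarrow> real) \<Rightarrow> real" where
  "bs p n f = (\<Sum>k\<le>n. real (n choose k) * p ^ k * (1 - p) ^ (n - k) * f k)"

lemma bs_add: "bs p n (\<lambda>k. f k + g k) = bs p n f + bs p n g"
  unfolding bs_def by (simp add: algebra_simps sum.distrib)

lemma bs_cmult: "bs p n (\<lambda>k. c * f k) = c * bs p n f"
  unfolding bs_def by (simp add: algebra_simps sum_distrib_left)

lemma bs_diff: "bs p n (\<lambda>k. f k - g k) = bs p n f - bs p n g"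
  unfolding bs_def by (simp add: algebra_simps sum_subtractf)

lemma bs_Suc: "bs p (Suc n) f = (1 - p) * bs p n f + p * bs p n (\<lambda>k. f (Suc k))"
proof -
  let ?a = "\<lambda>k. real (n choose k) * p ^ k * (1 - p) ^ (Suc n - k) * f k"
  have "bs p (Suc n) f = real (Suc n choose 0) * p ^ 0 * (1 - p) ^ (Suc n - 0) * f 0 +
     (\<Sum>k\<le>n. real (Suc n choose Suc k) * p ^ Suc k * (1 - p) ^ (Suc n - Suc k) * f (Suc k))"
    unfolding bs_def by (rule sum.atMost_Suc_shift)
  also have "\<dots> = ?a 0 + (\<Sum>k\<le>n. ?a (Suc k)) +
      (\<Sum>k\<le>n. p * (real (n choose k) * p ^ k * (1 - p) ^ (n - k) * f (Suc k)))"
    by (simp add: sum.distrib algebra_simps)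
  also have "?a 0 + (\<Sum>k\<le>n. ?a (Suc k)) = (\<Sum>k\<le>Suc n. ?a k)"
    by (rule sum.atMost_Suc_shift[symmetric])
  also have "\<dots> = (\<Sum>k\<le>n. ?a k)" by simp
  also have "\<dots> = (1 - p) * bs p n f" unfolding bs_def sum_distrib_left
    by (rule sum.cong) (auto simp: Suc_diff_le)
  finally show ?thesis unfolding bs_def by (simp add: sum_distrib_left)
qed

lemma bs0: "bs p n (\<lambda>k. 1) = 1"
  by (induction n) (auto simp: bs_Suc, simp add: bs_def)

lemma bs_cong: "(\<And>k. k \<le> n \<Longrightarrow> f k = g k) \<Longrightarrow> bs p n f = bs p n g"
  unfolding bs_def by (rule sum.cong) auto

lemma bs1: "bs p n (\<lambda>k. real k) = real n * p"
proof (induction n)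
  case 0 then show ?case by (simp add: bs_def)
next
  case (Suc n)
  have "bs p n (\<lambda>k. real (Suc k)) = bs p n (\<lambda>k. real k + 1)" by (rule bs_cong) simp
  also have "\<dots> = bs p n (\<lambda>k. real k) + bs p n (\<lambda>k. 1)" by (rule bs_add)
  finally have e: "bs p n (\<lambda>k. real (Suc k)) = real n * p + 1" using Suc bs0[of p n] by simp
  show ?case unfolding bs_Suc e Suc.IH by (simp add: algebra_simps)
qed

lemma bs2: "bs p n (\<lambda>k. real k ^ 2) = real n * p + real n * (real n - 1) * p ^ 2"
proof (induction n)
  case 0 then show ?case by (simp add: bs_def)
next
  case (Suc n)
  have "bs p n (\<lambda>k. real (Suc k) ^ 2) = bs p n (\<lambda>k. real k ^ 2 + (2 * real k + 1))"
    by (rule bs_cong) (simp add: power2_eq_square algebra_simps)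
  also have "\<dots> = bs p n (\<lambda>k. real k ^ 2) + (2 * bs p n (\<lambda>k. real k) + bs p n (\<lambda>k. 1))"
    by (simp only: bs_add bs_cmult)
  finally have e: "bs p n (\<lambda>k. real (Suc k) ^ 2) = real n * p + real n * (real n - 1) * p ^ 2
       + (2 * (real n * p) + 1)" using Suc bs0[of p n] bs1[of p n] by simp
  show ?case unfolding bs_Suc e Suc.IH by (simp add: algebra_simps power2_eq_square)
qed

lemma bs3: "bs p n (\<lambda>k. real k ^ 3) = real n * p + 3 * real n * (real n - 1) * p ^ 2
   + real n * (real n - 1) * (real n - 2) * p ^ 3"
proof (induction n)
  case 0 then show ?case by (simp add: bs_def)
next
  case (Suc n)
  have "bs p n (\<lambda>k. real (Suc k) ^ 3) = bs p n (\<lambda>k. real k ^ 3 + (3 * real k ^ 2 + (3 * real k + 1)))"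
    by (rule bs_cong) (simp add: power3_eq_cube power2_eq_square algebra_simps)
  also have "\<dots> = bs p n (\<lambda>k. real k ^ 3) + (3 * bs p n (\<lambda>k. real k ^ 2) + (3 * bs p n (\<lambda>k. real k) + bs p n (\<lambda>k. 1)))"
    by (simp only: bs_add bs_cmult)
  finally have e: "bs p n (\<lambda>k. real (Suc k) ^ 3) = (real n * p + 3 * real n * (real n - 1) * p ^ 2
   + real n * (real n - 1) * (real n - 2) * p ^ 3) + (3 * (real n * p + real n * (real n - 1) * p ^ 2)
       + (3 * (real n * p) + 1))" using Suc bs0[of p n] bs1[of p n] bs2[of p n] by simp
  show ?case unfolding bs_Suc e Suc.IH by (simp add: algebra_simps power2_eq_square power3_eq_cube)
qed


lemma expect_g: "expect n p (\<lambda>k t. g k) = bs p n g"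
  unfolding expect_def bs_def atLeast0AtMost[of n, symmetric]
proof (rule sum.cong[OF refl])
  fix k assume k: "k \<in> {0..n}"
  have "(\<Sum>t = 0..k * (n - k). g k * jointPMF n p k t) =
        (\<Sum>t = 0..k * (n - k). real (numP k (n - k) t)) * (g k * (1 - p) ^ (n - k) * p ^ k)"
    unfolding sum_distrib_right by (rule sum.cong) (use k in \<open>auto simp: jointPMF_def\<close>)
  also have "\<dots> = real (n choose k) * p ^ k * (1 - p) ^ (n - k) * g k"
    using k by (simp add: numP_sum0)
  finally show "(\<Sum>t = 0..k * (n - k). g k * jointPMF n p k t) = real (n choose k) * p ^ k * (1 - p) ^ (n - k) * g k" .
qed

lemma expect_gt: "expect n p (\<lambda>k t. g k * real t) = bs p n (\<lambda>k. g k * (real k * real (n - k) / 2))"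
  unfolding expect_def bs_def atLeast0AtMost[of n, symmetric]
proof (rule sum.cong[OF refl])
  fix k assume k: "k \<in> {0..n}"
  have "(\<Sum>t = 0..k * (n - k). g k * real t * jointPMF n p k t) =
        (\<Sum>t = 0..k * (n - k). real t * real (numP k (n - k) t)) * (g k * (1 - p) ^ (n - k) * p ^ k)"
    unfolding sum_distrib_right by (rule sum.cong) (use k in \<open>auto simp: jointPMF_def\<close>)
  also have "\<dots> = real (n choose k) * p ^ k * (1 - p) ^ (n - k) * (g k * (real k * real (n - k) / 2))"
    using k by (simp add: numP_sum1)
  finally show "(\<Sum>t = 0..k * (n - k). g k * real t * jointPMF n p k t) = real (n choose k) * p ^ k * (1 - p) ^ (n - k) * (g k * (real k * real (n - k) / 2))" .
qed

lemma choose2_nat: "2 * (n choose 2) = n * (n - 1)"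
proof -
  have "2 dvd (n * (n - 1))" by auto
  then show ?thesis unfolding choose_two by (rule dvd_mult_div_cancel)
qed

lemma choose2_real: "real (n choose 2) = real n * (real n - 1) / 2"
proof -
  have a: "real (2 * (n choose 2)) = real (n * (n - 1))" by (simp only: choose2_nat)
  have b: "real (n * (n - 1)) = real n * (real n - 1)" by (cases n) (auto simp: algebra_simps)
  have c: "real (2 * (n choose 2)) = real n * (real n - 1)" using a b by (rule trans)
  then show ?thesis by linarith
qed

theorem theorem3:
  fixes n :: nat and p :: real
  assumes "0 < p" and "p < 1"
  shows "expect n p (\<lambda>k t. real k * real t)
           = real (n choose 2) * p * (1 - p) * (p * (real n - 2) + 1)
         \<and> covYT n p = real (n choose 2) * p * (1 - p) * (1 - 2 * p)"
proof -
  have EY: "expect n p (\<lambda>k t. real k) = real n * p" using expect_g[of n p real] bs1 by simp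
  have "expect n p (\<lambda>k t. real t) = expect n p (\<lambda>k t. 1 * real t)" by simp
  also have "\<dots> = bs p n (\<lambda>k. 1 * (real k * real (n - k) / 2))" by (rule expect_gt)
  also have "\<dots> = bs p n (\<lambda>k. (1/2 * real n) * real k - 1/2 * real k ^ 2)"
    by (rule bs_cong) (auto simp: of_nat_diff power2_eq_square field_simps)
  also have "\<dots> = (1/2 * real n) * bs p n (\<lambda>k. real k) - 1/2 * bs p n (\<lambda>k. real k ^ 2)"
    by (simp only: bs_diff bs_cmult)
  finally have ET: "expect n p (\<lambda>k t. real t) = (1/2 * real n) * (real n * p) - 1/2 * (real n * p + real n * (real n - 1) * p ^ 2)"
    by (simp add: bs1 bs2)
  have "expect n p (\<lambda>k t. real k * real t) = bs p n (\<lambda>k. real k * (real k * real (n - k) / 2))" by (rule expect_gt)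
  also have "\<dots> = bs p n (\<lambda>k. (1/2 * real n) * real k ^ 2 - 1/2 * real k ^ 3)"
    by (rule bs_cong) (auto simp: of_nat_diff power2_eq_square power3_eq_cube field_simps)
  also have "\<dots> = (1/2 * real n) * bs p n (\<lambda>k. real k ^ 2) - 1/2 * bs p n (\<lambda>k. real k ^ 3)"
    by (simp only: bs_diff bs_cmult)
  finally have EYT: "expect n p (\<lambda>k t. real k * real t) = (1/2 * real n) * (real n * p + real n * (real n - 1) * p ^ 2)
     - 1/2 * (real n * p + 3 * real n * (real n - 1) * p ^ 2 + real n * (real n - 1) * (real n - 2) * p ^ 3)"
    by (simp add: bs2 bs3)
  show ?thesis unfolding covYT_def EY ET EYT choose2_real
    by (simp add: algebra_simps power2_eq_square power3_eq_cube)
qed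

end
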